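(* The Nield-Kuznetsov function $N_{W}(a,x)$ and the complementary version $\hat N_W(a,x)$ are related by \[ N_{W}(a,x)=c_{0}^{+}(a)W(a,x)+c_{0}^{-}(a)W(a,-x)-\hat{N}_{W}(a,x), \] where \[ c_{0}^{\pm}(a)=\mp \hat{N}_{W}'(a,0)W(a,0) - \hat{N}_{W}(a,0)W'(a,0). \]
   Context: $a$ is real; $W(a,\pm x)$ are the Weber parabolic cylinder functions (DLMF Sect. 12.14), numerically satisfactory solutions of $y''+(\tfrac14 x^2-a)y=0$, with $W(a,0)W'(a,0)=-\tfrac12$. The Nield-Kuznetsov function of the first kind is $N_{W}(a,x)=W(a,x) \int_{0}^x W(a,-t)dt-W(a,-x)\int_{0}^x W(a,t)dt$, a solution of $y''+(\tfrac14 x^2-a)y=-1$ with $N_W(a,0)=N_W'(a,0)=0$. The complementary Nield-Kuznetsov function is $\hat{N}_{W}(a,x)=W(a,x)\int_{x}^{\infty} W(a,-t)dt-W(a,-x) \int_{x}^{\infty} W(a,t)dt$, whose negative also solves $y''+(\tfrac14 x^2-a)y=-1$. The solution of this inhomogeneous equation with $y(a,0)=\alpha$, $y'(a,0)=\beta$ is $y=C^{+}W(a,x)+C^{-}W(a,-x)+N_W(a,x)$ with $C^{\pm}=\mp\beta W(a,0)-\alpha W'(a,0)$. *)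

theory Defs
  imports "HOL-Analysis.Analysis"
begin

text \<open>Power-series coefficients of the solution of y'' + (x^2/4 - a) y = 0 with
  y(0) = c0, y'(0) = c1:  (n+2)(n+1) c_{n+2} = a c_n - c_{n-2}/4  (c_{-2} = 0).\<close>
fun pcf_coef :: "real \<Rightarrow> real \<Rightarrow> real \<Rightarrow> nat \<Rightarrow> real" where
  "pcf_coef a c0 c1 0 = c0"
| "pcf_coef a c0 c1 (Suc 0) = c1"
| "pcf_coef a c0 c1 (Suc (Suc n)) =
     (a * pcf_coef a c0 c1 n - (if n \<ge> 2 then pcf_coef a c0 c1 (n - 2) / 4 else 0))
     / (real (n + 2) * real (n + 1))"

definition pcf_w1 :: "real \<Rightarrow> real \<Rightarrow> real" where
  "pcf_w1 a x = (\<Sum>n. pcf_coef a 1 0 n * x ^ n)"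

definition pcf_w2 :: "real \<Rightarrow> real \<Rightarrow> real" where
  "pcf_w2 a x = (\<Sum>n. pcf_coef a 0 1 n * x ^ n)"

text \<open>Initial values of Weber's W (DLMF 12.14.4-5).\<close>
definition W0 :: "real \<Rightarrow> real" where
  "W0 a = 2 powr (-3/4) *
     sqrt (cmod (Gamma (1/4 + \<i> * complex_of_real (a/2)) / Gamma (3/4 + \<i> * complex_of_real (a/2))))"

definition W0' :: "real \<Rightarrow> real" where
  "W0' a = - (2 powr (-1/4) *
     sqrt (cmod (Gamma (3/4 + \<i> * complex_of_real (a/2)) / Gamma (1/4 + \<i> * complex_of_real (a/2)))))"

definition weberW :: "real \<Rightarrow> real \<Rightarrow> real" where
  "weberW a x = W0 a * pcf_w1 a x + W0' a * pcf_w2 a x"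

definition oint :: "real \<Rightarrow> real \<Rightarrow> (real \<Rightarrow> real) \<Rightarrow> real" where
  "oint u v f = (if u \<le> v then integral {u..v} f else - integral {v..u} f)"

definition NW :: "real \<Rightarrow> real \<Rightarrow> real" where
  "NW a x = weberW a x * oint 0 x (\<lambda>t. weberW a (-t))
          - weberW a (-x) * oint 0 x (\<lambda>t. weberW a t)"

definition NW_hat :: "real \<Rightarrow> real \<Rightarrow> real" where
  "NW_hat a x = weberW a x * integral {x..} (\<lambda>t. weberW a (-t))
              - weberW a (-x) * integral {x..} (\<lambda>t. weberW a t)"

end

theory Submission
  imports Defs "HOL-Analysis.Analysis"
begin

lemma coef_bound:
  fixes \<rho> :: real
  assumes rho: "\<rho> > 0"
  shows "\<exists>K. \<forall>n. \<bar>pcf_coef a c0 c1 n\<bar> \<le> K * \<rho>^n"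
proof -
  define c where "c = pcf_coef a c0 c1"
  define L where "L = \<bar>a\<bar>/\<rho>^2 + 1/(4*\<rho>^4)"
  define N where "N = nat \<lceil>L\<rceil> + 2"
  define K where "K = (\<Sum>k\<le>N+1. \<bar>c k\<bar>/\<rho>^k)"
  have K0: "K \<ge> 0" unfolding K_def using rho by (intro sum_nonneg) auto
  have base: "\<bar>c k\<bar> \<le> K * \<rho>^k" if "k \<le> N+1" for k
  proof -
    have "\<bar>c k\<bar>/\<rho>^k \<le> K" unfolding K_def
      by (rule member_le_sum) (use that rho in auto)
    thus ?thesis using rho by (simp add: divide_le_eq mult.commute)
  qed
  have "\<bar>c n\<bar> \<le> K * \<rho>^n" for n
  proof (induction n rule: less_induct)
    case (less n)
    show ?case
    proof (cases "n \<le> N+1")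
      case True then show ?thesis by (rule base)
    next
      case False
      then obtain j where nj: "n = j + 4" and jN: "j + 2 \<ge> N"
      proof -
        have "n \<ge> 4" using False unfolding N_def by linarith
        then show ?thesis using False that[of "n - 4"] by auto
      qed
      have rec: "c (j+4) = (a * c (j+2) - c j / 4) / (real (j+4) * real (j+3))"
        unfolding c_def by (simp add: numeral_eq_Suc)
      have IH1: "\<bar>c (j+2)\<bar> \<le> K * \<rho>^(j+2)" using less.IH[of "j+2"] nj by simp
      have IH2: "\<bar>c j\<bar> \<le> K * \<rho>^j" using less.IH[of "j"] nj by simp
      have "\<bar>a * c (j+2) - c j / 4\<bar> \<le> \<bar>a\<bar> * (K * \<rho>^(j+2)) + K * \<rho>^j / 4"
      proof -
        have "\<bar>a * c (j+2) - c j / 4\<bar> \<le> \<bar>a\<bar> * \<bar>c (j+2)\<bar> + \<bar>c j\<bar> / 4"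
          by (simp add: abs_mult abs_triangle_ineq4[THEN order_trans])
        also have "\<dots> \<le> \<bar>a\<bar> * (K * \<rho>^(j+2)) + K * \<rho>^j / 4"
          using IH1 IH2 by (intro add_mono mult_left_mono) auto
        finally show ?thesis .
      qed
      also have "\<dots> = K * \<rho>^(j+4) * L"
        unfolding L_def using rho by (simp add: field_simps power_add eval_nat_numeral)
      also have "\<dots> \<le> K * \<rho>^(j+4) * (real (j+4) * real (j+3))"
      proof (rule mult_left_mono)
        have "L \<le> real (nat \<lceil>L\<rceil>)" by linarith
        also have "\<dots> \<le> real (j+4) * 1"
        proof -
          have "nat \<lceil>L\<rceil> \<le> j+4" using jN unfolding N_def by linarith
          then show ?thesis by (simp only: of_nat_le_iff mult_1_right)
        qed
        also have "\<dots> \<le> real (j+4) * real (j+3)" by (intro mult_left_mono) auto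
        finally show "L \<le> real (j+4) * real (j+3)" .
      qed (use K0 rho in auto)
      finally have "\<bar>a * c (j+2) - c j / 4\<bar> / (real (j+4) * real (j+3)) \<le> K * \<rho>^(j+4)"
        by (simp add: divide_le_eq)
      then show ?thesis using nj rec by (simp add: abs_divide)
    qed
  qed
  then show ?thesis unfolding c_def by blast
qed

lemma coef_summable: "summable (\<lambda>n. pcf_coef a c0 c1 n * r^n)"
proof -
  define \<rho> where "\<rho> = 1 / (2 * (\<bar>r\<bar> + 1))"
  have rho: "\<rho> > 0" unfolding \<rho>_def by (simp add: add_pos_nonneg)
  obtain K where K: "\<And>n. \<bar>pcf_coef a c0 c1 n\<bar> \<le> K * \<rho>^n" using coef_bound[OF rho] by blast
  have q: "\<rho> * \<bar>r\<bar> < 1" unfolding \<rho>_def by (simp add: field_simps)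
  have q0: "\<rho> * \<bar>r\<bar> \<ge> 0" using rho by simp
  show ?thesis
  proof (rule summable_comparison_test)
    show "\<exists>N. \<forall>n\<ge>N. norm (pcf_coef a c0 c1 n * r^n) \<le> K * (\<rho> * \<bar>r\<bar>)^n"
    proof (intro exI allI impI)
      fix n :: nat
      show "norm (pcf_coef a c0 c1 n * r^n) \<le> K * (\<rho> * \<bar>r\<bar>)^n"
        using mult_right_mono[OF K[of n], of "\<bar>r\<bar>^n"]
        by (simp add: abs_mult power_abs power_mult_distrib mult.assoc)
    qed
    show "summable (\<lambda>n. K * (\<rho> * \<bar>r\<bar>)^n)"
      using q q0 by (intro summable_mult summable_geometric) simp
  qed
qed

lemma ps_deriv:
  fixes c :: "nat \<Rightarrow> real"
  assumes "\<And>y. summable (\<lambda>n. c n * y^n)"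
  shows "((\<lambda>x. \<Sum>n. c n * x^n) has_real_derivative (\<Sum>n. diffs c n * x^n)) (at x)"
  using termdiffs_strong_converges_everywhere[of c x] assms by blast

lemma diffs_summable:
  fixes c :: "nat \<Rightarrow> real"
  assumes "\<And>y. summable (\<lambda>n. c n * y^n)"
  shows "summable (\<lambda>n. diffs c n * x^n)"
  using termdiff_converges_all assms by blast

lemma coef_ode:
  "(\<Sum>n. diffs (diffs (pcf_coef a c0 c1)) n * x^n) = (a - x^2/4) * (\<Sum>n. pcf_coef a c0 c1 n * x^n)"
proof -
  define c where "c = pcf_coef a c0 c1"
  define S where "S = (\<Sum>n. c n * x^n)"
  have S: "(\<lambda>n. c n * x^n) sums S" unfolding S_def c_def using coef_summable summable_sums by blast
  define h where "h n = (if n \<ge> 2 then c (n-2) / 4 else 0) * x^n" for n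
  have dd: "diffs (diffs c) n * x^n = a * (c n * x^n) - h n" for n
  proof -
    have "diffs (diffs c) n = real (Suc n) * real (Suc (Suc n)) * c (Suc (Suc n))"
      by (simp add: diffs_def)
    also have "\<dots> = a * c n - (if n \<ge> 2 then c (n-2) / 4 else 0)"
    proof -
      define E where "E = a * c n - (if n \<ge> 2 then c (n-2) / 4 else 0)"
      define D where "D = real (n + 2) * real (n + 1)"
      have D0: "D \<noteq> 0" unfolding D_def by simp
      have "c (Suc (Suc n)) = E / D" unfolding c_def E_def D_def by simp
      then have "real (Suc n) * real (Suc (Suc n)) * c (Suc (Suc n)) = D * (E / D)"
        unfolding D_def by (simp add: algebra_simps)
      also have "\<dots> = E" using D0 by simp
      finally show ?thesis unfolding E_def .
    qed
    finally have e: "diffs (diffs c) n = a * c n - (if n \<ge> 2 then c (n-2) / 4 else 0)" .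
    show ?thesis unfolding h_def e by (cases "2 \<le> n") (simp_all add: algebra_simps)
  qed
  have "(\<lambda>i. h (i+2)) sums (x^2/4 * S)"
  proof -
    have eq: "(\<lambda>i. h (i+2)) = (\<lambda>i. x^2/4 * (c i * x^i))"
      by (rule ext) (simp add: h_def power_add field_simps power2_eq_square)
    show ?thesis unfolding eq by (rule sums_mult[OF S])
  qed
  then have "h sums (x^2/4 * S + (\<Sum>i<2. h i))" by (simp only: sums_iff_shift)
  then have hs: "h sums (x^2/4 * S)" by (simp add: h_def eval_nat_numeral)
  have "(\<lambda>n. a * (c n * x^n) - h n) sums (a * S - x^2/4 * S)"
    by (intro sums_diff sums_mult S hs)
  then have "(\<lambda>n. diffs (diffs c) n * x^n) sums ((a - x^2/4) * S)"
    by (simp only: dd[symmetric] left_diff_distrib)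
  then show ?thesis unfolding S_def c_def by (simp add: sums_iff)
qed

definition weberWd :: "real \<Rightarrow> real \<Rightarrow> real" where
  "weberWd a x = W0 a * (\<Sum>n. diffs (pcf_coef a 1 0) n * x^n) + W0' a * (\<Sum>n. diffs (pcf_coef a 0 1) n * x^n)"

lemma W_deriv: "(weberW a has_real_derivative weberWd a x) (at x)"
proof -
  have "((\<lambda>x. W0 a * pcf_w1 a x + W0' a * pcf_w2 a x) has_real_derivative weberWd a x) (at x)"
    unfolding weberWd_def pcf_w1_def pcf_w2_def
    by (intro DERIV_add DERIV_cmult ps_deriv coef_summable)
  then show ?thesis unfolding weberW_def[abs_def] by simp
qed

lemma Wd_deriv: "(weberWd a has_real_derivative (a - x^2/4) * weberW a x) (at x)"
proof -
  have "(weberWd a has_real_derivative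
     W0 a * (\<Sum>n. diffs (diffs (pcf_coef a 1 0)) n * x^n) + W0' a * (\<Sum>n. diffs (diffs (pcf_coef a 0 1)) n * x^n)) (at x)"
    unfolding weberWd_def[abs_def]
    by (intro DERIV_add DERIV_cmult ps_deriv diffs_summable coef_summable)
  also have "W0 a * (\<Sum>n. diffs (diffs (pcf_coef a 1 0)) n * x^n) + W0' a * (\<Sum>n. diffs (diffs (pcf_coef a 0 1)) n * x^n)
     = (a - x^2/4) * weberW a x"
    unfolding coef_ode weberW_def pcf_w1_def pcf_w2_def by (simp add: algebra_simps)
  finally show ?thesis .
qed

lemma W_at0: "weberW a 0 = W0 a"
  unfolding weberW_def pcf_w1_def pcf_w2_def by (simp add: powser_zero)

lemma Wd_at0: "weberWd a 0 = W0' a"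
  unfolding weberWd_def by (simp add: powser_zero diffs_def)

lemma W_cont: "continuous_on S (weberW a)"
  using W_deriv by (meson DERIV_isCont continuous_at_imp_continuous_on)

lemma Wd_cont: "continuous_on S (weberWd a)"
  using Wd_deriv by (meson DERIV_isCont continuous_at_imp_continuous_on)

lemma Gamma_ne: "Gamma (complex_of_real r + \<i> * complex_of_real s) \<noteq> 0" if "r > 0" for r s
proof (rule Gamma_nonzero)
  show "complex_of_real r + \<i> * complex_of_real s \<notin> \<int>\<^sub>\<le>\<^sub>0"
  proof
    assume "complex_of_real r + \<i> * complex_of_real s \<in> \<int>\<^sub>\<le>\<^sub>0"
    then obtain n where "complex_of_real r + \<i> * complex_of_real s = - of_nat n" by (rule nonpos_Ints_cases')
    then have "Re (complex_of_real r + \<i> * complex_of_real s) = Re (- of_nat n)" by simp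
    then show False using that by simp
  qed
qed

lemma W0_prod: "W0 a * W0' a = -1/2"
proof -
  define g1 where "g1 = Gamma (1/4 + \<i> * complex_of_real (a/2))"
  define g2 where "g2 = Gamma (3/4 + \<i> * complex_of_real (a/2))"
  have "g1 = Gamma (complex_of_real (1/4) + \<i> * complex_of_real (a/2))" unfolding g1_def by simp
  then have g1: "g1 \<noteq> 0" using Gamma_ne[of "1/4" "a/2"] by (simp only:) simp
  have "g2 = Gamma (complex_of_real (3/4) + \<i> * complex_of_real (a/2))" unfolding g2_def by simp
  then have g2: "g2 \<noteq> 0" using Gamma_ne[of "3/4" "a/2"] by (simp only:) simp
  have "W0 a * W0' a = - (2 powr (-3/4) * 2 powr (-1/4)) * (sqrt (cmod (g1/g2)) * sqrt (cmod (g2/g1)))"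
    unfolding W0_def W0'_def g1_def g2_def by (simp add: algebra_simps)
  also have "2 powr (-3/4) * 2 powr (-1/4) = (2::real) powr (-1)" by (simp add: powr_add[symmetric])
  also have "sqrt (cmod (g1/g2)) * sqrt (cmod (g2/g1)) = 1"
    using g1 g2 by (simp add: real_sqrt_mult[symmetric] norm_divide)
  finally show ?thesis by (simp add: powr_minus)
qed

lemma ball_sub_Icc:
  fixes B a b :: real
  assumes "B > 0" "ball 0 B \<subseteq> cbox a b"
  shows "a \<le> -B \<and> B \<le> b"
proof -
  have "{-B<..<B} \<subseteq> {a..b}" using assms by (simp add: ball_eq_greaterThanLessThan)
  then have H: "\<And>x. -B < x \<Longrightarrow> x < B \<Longrightarrow> a \<le> x \<and> x \<le> b" by auto
  have 1: "a \<le> -B"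
  proof (rule ccontr)
    assume "\<not> a \<le> -B"
    then show False using H[of "(-B + min a 0)/2"] assms(1) by (cases "a \<le> 0") (auto simp: min_def)
  qed
  have 2: "B \<le> b"
  proof (rule ccontr)
    assume "\<not> B \<le> b"
    then show False using H[of "(B + max b 0)/2"] assms(1) by (cases "b \<le> 0") (auto simp: max_def)
  qed
  show ?thesis using 1 2 by simp
qed

lemma restrict_Ici_cbox:
  fixes f :: "real \<Rightarrow> real"
  assumes "a \<le> c"
  shows "integral (cbox a b) (\<lambda>x. if x \<in> {c..} then f x else 0) = integral {c..b} f"
proof -
  have "integral (cbox a b) (\<lambda>x. if x \<in> {c..} then f x else 0) = integral ({c..} \<inter> cbox a b) f"
    by (rule integral_restrict_Int)
  also have "{c..} \<inter> cbox a b = {c..b}" using assms by auto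
  finally show ?thesis .
qed

lemma has_integral_Ici_iff:
  fixes f :: "real \<Rightarrow> real"
  assumes int: "\<And>y. f integrable_on {c..y}"
  shows "(f has_integral l) {c..} \<longleftrightarrow> ((\<lambda>y. integral {c..y} f) \<longlongrightarrow> l) at_top"
proof
  assume H: "(f has_integral l) {c..}"
  show "((\<lambda>y. integral {c..y} f) \<longlongrightarrow> l) at_top"
  proof (rule tendstoI)
    fix e :: real assume e: "e > 0"
    then obtain B where B: "B > 0" and BB: "\<And>a b. ball 0 B \<subseteq> cbox a b \<Longrightarrow>
          norm (integral (cbox a b) (\<lambda>x. if x \<in> {c..} then f x else 0) - l) < e"
      using H unfolding has_integral_alt' by blast
    show "\<forall>\<^sub>F y in at_top. dist (integral {c..y} f) l < e"
    proof (rule eventually_at_top_linorderI[of B])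
      fix y assume y: "y \<ge> B"
      have "ball 0 B \<subseteq> cbox (-(B + \<bar>c\<bar>)) y" using y B
        by (auto simp: ball_eq_greaterThanLessThan)
      from BB[OF this] show "dist (integral {c..y} f) l < e"
        using restrict_Ici_cbox[of "-(B + \<bar>c\<bar>)" c y f] B by (simp add: dist_norm)
    qed
  qed
next
  assume L: "((\<lambda>y. integral {c..y} f) \<longlongrightarrow> l) at_top"
  show "(f has_integral l) {c..}"
    unfolding has_integral_alt'
  proof (intro conjI allI impI)
    fix a b :: real
    have "f integrable_on ({c..} \<inter> cbox a b)"
    proof -
      have "{c..} \<inter> cbox a b = {max a c..b}" by auto
      moreover have "f integrable_on {max a c..b}"
        by (rule integrable_on_subinterval[OF int[of b]]) auto
      ultimately show ?thesis by (simp only:)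
    qed
    then show "(\<lambda>x. if x \<in> {c..} then f x else 0) integrable_on cbox a b"
      by (simp only: integrable_restrict_Int)
  next
    fix e :: real assume e: "e > 0"
    from L e obtain Y where Y: "\<And>y. y \<ge> Y \<Longrightarrow> dist (integral {c..y} f) l < e"
      unfolding tendsto_iff eventually_at_top_linorder by blast
    show "\<exists>B>0. \<forall>a b. ball 0 B \<subseteq> cbox a b \<longrightarrow>
            norm (integral (cbox a b) (\<lambda>x. if x \<in> {c..} then f x else 0) - l) < e"
    proof (intro exI[of _ "\<bar>Y\<bar> + \<bar>c\<bar> + 1"] conjI allI impI)
      fix a b :: real assume "ball 0 (\<bar>Y\<bar> + \<bar>c\<bar> + 1) \<subseteq> cbox a b"
      then have ab: "a \<le> -(\<bar>Y\<bar> + \<bar>c\<bar> + 1)" "\<bar>Y\<bar> + \<bar>c\<bar> + 1 \<le> b"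
        using ball_sub_Icc[of "\<bar>Y\<bar> + \<bar>c\<bar> + 1" a b] by auto
      then have "a \<le> c" "b \<ge> Y" by auto
      then show "norm (integral (cbox a b) (\<lambda>x. if x \<in> {c..} then f x else 0) - l) < e"
        using restrict_Ici_cbox[of a c b f] Y[of b] by (simp add: dist_norm)
    qed simp
  qed
qed

lemma ode_integrable:
  fixes y y1 :: "real \<Rightarrow> real" and a c :: real
  assumes d0: "\<And>x. (y has_real_derivative y1 x) (at x)"
      and d1: "\<And>x. (y1 has_real_derivative (a - x^2/4) * y x) (at x)"
  shows "y integrable_on {c..}"
proof -
  define q where "q x = x^2/4 - a" for x
  define X where "X = max c (3 * (\<bar>a\<bar> + 1))"
  have X3: "X \<ge> 3 * (\<bar>a\<bar> + 1)" unfolding X_def by simp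
  have Xc: "c \<le> X" unfolding X_def by simp
  have xpos: "x > 0" if "x \<ge> X" for x using that X3 by (smt (verit) abs_ge_zero)
  have Xpos: "X > 0" using xpos[of X] by simp
  have xsq: "x^2 \<ge> 9 * (\<bar>a\<bar> + 1)" if "x \<ge> X" for x
  proof -
    have "(3 * (\<bar>a\<bar> + 1))^2 \<le> x^2" using that X3 by (intro power_mono) auto
    moreover have "(3 * (\<bar>a\<bar> + 1))^2 = 9 * (\<bar>a\<bar> + 1) * (\<bar>a\<bar> + 1)" by (simp add: power2_eq_square algebra_simps)
    moreover have "9 * (\<bar>a\<bar> + 1) * (\<bar>a\<bar> + 1) \<ge> 9 * (\<bar>a\<bar> + 1) * 1" by (intro mult_left_mono) auto
    ultimately show ?thesis by linarith
  qed
  have xsq': "x^2 \<ge> 9 * \<bar>a\<bar> + 9" if "x \<ge> X" for x using xsq[OF that] by (simp add: algebra_simps)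
  have qlow: "q x \<ge> x^2/8" if "x \<ge> X" for x using xsq'[OF that] abs_ge_self[of a] abs_ge_zero[of a] unfolding q_def by linarith
  have qup: "q x \<le> x^2/2" if "x \<ge> X" for x using xsq'[OF that] abs_ge_minus_self[of a] abs_ge_zero[of a] unfolding q_def by linarith
  have qpos: "q x > 0" if "x \<ge> X" for x proof -
    have "0 < x^2/8" using xpos[OF that] by simp
    then show ?thesis using qlow[OF that] by linarith
  qed
  have dq: "(q has_real_derivative x/2) (at x)" for x
    unfolding q_def[abs_def] by (auto intro!: derivative_eq_intros)
  have cy: "continuous_on S y" for S using d0 by (meson DERIV_isCont continuous_at_imp_continuous_on)
  have cy1: "continuous_on S y1" for S using d1 by (meson DERIV_isCont continuous_at_imp_continuous_on)
  have cq: "continuous_on S q" for S unfolding q_def by (intro continuous_intros) auto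
  define E where "E x = y1 x * y1 x / q x + y x * y x" for x
  have dE: "(E has_real_derivative - (y1 x * y1 x * x / (2 * (q x * q x)))) (at x)" if "x \<ge> X" for x
  proof -
    have "(E has_real_derivative
        (((a - x^2/4) * y x * y1 x + (a - x^2/4) * y x * y1 x) * q x - y1 x * y1 x * (x/2)) / (q x * q x)
        + (y1 x * y x + y1 x * y x)) (at x)"
      unfolding E_def[abs_def]
      by (intro DERIV_add DERIV_divide DERIV_mult d0 d1 dq) (use qpos[OF that] in simp)
    moreover have "(((a - x^2/4) * y x * y1 x + (a - x^2/4) * y x * y1 x) * q x - y1 x * y1 x * (x/2)) / (q x * q x)
        + (y1 x * y x + y1 x * y x) = - (y1 x * y1 x * x / (2 * (q x * q x)))"
    proof -
      have aq: "a - x^2/4 = - q x" unfolding q_def by simp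
      show ?thesis unfolding aq using qpos[OF that] by (simp add: field_simps)
    qed
    ultimately show ?thesis by simp
  qed
  have Emono: "E t \<le> E s" if "X \<le> s" "s \<le> t" for s t
  proof (rule DERIV_nonpos_imp_nonincreasing[OF that(2)])
    fix x assume x: "s \<le> x" "x \<le> t"
    then have xX: "x \<ge> X" using that by simp
    have "0 \<le> y1 x * y1 x * x / (2 * (q x * q x))"
      using xpos[OF xX] qpos[OF xX] by simp
    then show "\<exists>D. (E has_real_derivative D) (at x) \<and> D \<le> 0" using dE[OF xX] by force
  qed
  define M where "M = E X"
  define K where "K = sqrt M"
  have M0: "M \<ge> 0" unfolding M_def E_def using qpos[of X] by simp
  have K0: "K \<ge> 0" unfolding K_def using M0 by simp
  have y1b: "\<bar>y1 x\<bar> \<le> K * x" if "x \<ge> X" for x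
  proof -
    have "y1 x * y1 x / q x \<le> M" using Emono[of X x] that zero_le_square[of "y x"] unfolding M_def E_def by linarith
    then have "y1 x * y1 x \<le> M * q x" using qpos[OF that] by (simp add: divide_le_eq)
    also have "\<dots> \<le> M * x^2" using qup[OF that] M0 xpos[OF that]
      by (intro mult_left_mono) (auto, smt (verit) zero_le_power)
    also have "\<dots> = (K * x)^2" unfolding K_def using M0 by (simp add: power_mult_distrib)
    finally have "\<bar>y1 x\<bar>^2 \<le> (K * x)^2" by (simp add: power2_eq_square)
    then show ?thesis by (rule power2_le_imp_le) (use K0 xpos[OF that] in simp)
  qed
  define h where "h x = - y1 x / q x" for x
  define g where "g x = y1 x * x / (2 * (q x * q x))" for x
  have dh: "(h has_real_derivative y x + g x) (at x)" if "x \<ge> X" for x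
  proof -
    have "(h has_real_derivative ((- ((a - x^2/4) * y x)) * q x - (- y1 x) * (x/2)) / (q x * q x)) (at x)"
      unfolding h_def[abs_def]
      by (intro DERIV_divide DERIV_minus d1 dq) (use qpos[OF that] in simp)
    moreover have "((- ((a - x^2/4) * y x)) * q x - (- y1 x) * (x/2)) / (q x * q x) = y x + g x"
    proof -
      have aq: "a - x^2/4 = - q x" unfolding q_def by simp
      show ?thesis unfolding aq g_def using qpos[OF that] by (simp add: field_simps)
    qed
    ultimately show ?thesis by simp
  qed
  have cg: "continuous_on {X..} g"
    unfolding g_def using qpos by (intro continuous_intros cy1 cq) (auto, fastforce)
  have gb: "\<bar>g x\<bar> \<le> 32 * K / x^2" if "x \<ge> X" for x
  proof -
    have x0: "x > 0" and q0: "q x > 0" using xpos[OF that] qpos[OF that] by auto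
    have "\<bar>g x\<bar> = \<bar>y1 x\<bar> * x / (2 * (q x * q x))" unfolding g_def using x0 q0 by (simp add: abs_mult)
    also have "\<dots> \<le> (K * x) * x / (2 * (x^2/8) * (x^2/8))"
    proof (rule frac_le)
      show "0 \<le> K * x * x" using K0 x0 by simp
      show "\<bar>y1 x\<bar> * x \<le> K * x * x" using y1b[OF that] x0 by (intro mult_right_mono) auto
      show "0 < 2 * (x^2/8) * (x^2/8)" using x0 by simp
      have "x^2/8 * (x^2/8) \<le> q x * q x" using qlow[OF that] x0 q0 by (intro mult_mono) auto
      then show "2 * (x^2/8) * (x^2/8) \<le> 2 * (q x * q x)" by simp
    qed
    also have "\<dots> = 32 * K / x^2" using x0 by (simp add: field_simps power2_eq_square)
    finally show ?thesis .
  qed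
  define G where "G x = 32 * K / x^2" for x
  have G_int: "(G has_integral (32 * K / X)) {X..}"
  proof (rule has_integral_to_inf)
    fix t :: real
    show "G integrable_on {X..t}"
      unfolding G_def using Xpos by (intro integrable_continuous_interval continuous_intros) auto
  next
    fix t :: real assume "t \<ge> X" then show "G t \<ge> 0" unfolding G_def using K0 by simp
  next
    have "integral {X..t} G = 32 * K / X - 32 * K / t" if t: "t \<ge> X" for t
    proof -
      have "(G has_integral ((- 32 * K / t) - (- 32 * K / X))) {X..t}"
      proof (rule fundamental_theorem_of_calculus[OF t])
        fix x assume x: "x \<in> {X..t}"
        then have x0: "x > 0" using xpos by auto
        have "((\<lambda>x. - 32 * K / x) has_real_derivative G x) (at x)"
          unfolding G_def using x0 by (auto intro!: derivative_eq_intros simp: power2_eq_square)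
        then show "((\<lambda>x. - 32 * K / x) has_vector_derivative G x) (at x within {X..t})"
          by (simp add: has_real_derivative_iff_has_vector_derivative has_vector_derivative_at_within)
      qed
      then show ?thesis by (simp add: integral_unique)
    qed
    then have ev: "\<forall>\<^sub>F t in at_top. 32 * K / X - 32 * K / t = integral {X..t} G"
      by (auto simp: eventually_at_top_linorder intro!: exI[of _ X])
    have "((\<lambda>t. 32 * K / X - 32 * K / t) \<longlongrightarrow> 32 * K / X - 0) at_top"
      by (intro tendsto_intros tendsto_divide_0[OF tendsto_const] filterlim_at_top_imp_at_infinity filterlim_ident)
    then show "((\<lambda>t. integral {X..t} G) \<longlongrightarrow> 32 * K / X) at_top"
      using ev by (simp add: tendsto_cong)  
  qed
  have g_abs: "g absolutely_integrable_on {X..}"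
  proof (rule measurable_bounded_by_integrable_imp_absolutely_integrable)
    show "g \<in> borel_measurable (lebesgue_on {X..})"
      by (rule continuous_imp_measurable_on_sets_lebesgue[OF cg]) simp
    show "{X..} \<in> sets lebesgue" by simp
    show "G integrable_on {X..}" using G_int by blast
    show "norm (g x) \<le> G x" if "x \<in> {X..}" for x using gb that unfolding G_def by simp
  qed
  then have g_int: "g integrable_on {X..}" using set_lebesgue_integral_eq_integral(1) by blast
  have g_lim: "((\<lambda>T. integral {X..T} g) \<longlongrightarrow> integral {X..} g) at_top"
  proof (subst has_integral_Ici_iff[symmetric])
    show "g integrable_on {X..T}" for T
      by (rule integrable_continuous_interval) (rule continuous_on_subset[OF cg], auto)
    show "(g has_integral integral {X..} g) {X..}" using g_int by (simp add: has_integral_integral)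
  qed
  have h_lim: "(h \<longlongrightarrow> 0) at_top"
  proof (rule Lim_null_comparison)
    show "\<forall>\<^sub>F x in at_top. norm (h x) \<le> 8 * K / x"
    proof (rule eventually_at_top_linorderI[of X])
      fix x assume x: "x \<ge> X"
      have x0: "x > 0" and q0: "q x > 0" using xpos[OF x] qpos[OF x] by auto
      have "norm (h x) = \<bar>y1 x\<bar> / q x" unfolding h_def using q0 by (simp add: abs_divide)
      also have "\<dots> \<le> (K * x) / (x^2/8)"
        by (rule frac_le) (use K0 x0 y1b[OF x] qlow[OF x] in auto)
      also have "\<dots> = 8 * K / x" using x0 by (simp add: field_simps power2_eq_square)
      finally show "norm (h x) \<le> 8 * K / x" .
    qed
    show "((\<lambda>x. 8 * K / x) \<longlongrightarrow> 0) at_top"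
      by (intro tendsto_divide_0[OF tendsto_const] filterlim_at_top_imp_at_infinity filterlim_ident)
  qed
  have yint_eq: "integral {X..T} y = h T - h X - integral {X..T} g" if T: "T \<ge> X" for T
  proof -
    have "((\<lambda>x. y x + g x) has_integral (h T - h X)) {X..T}"
    proof (rule fundamental_theorem_of_calculus[OF T])
      fix x assume x: "x \<in> {X..T}"
      then show "(h has_vector_derivative y x + g x) (at x within {X..T})"
        using dh[of x] by (simp add: has_real_derivative_iff_has_vector_derivative has_vector_derivative_at_within)
    qed
    moreover have "(g has_integral integral {X..T} g) {X..T}"
      by (rule integrable_integral, rule integrable_continuous_interval)
         (rule continuous_on_subset[OF cg], auto)
    ultimately have "((\<lambda>x. (y x + g x) - g x) has_integral (h T - h X - integral {X..T} g)) {X..T}"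
      by (rule has_integral_diff)
    then show ?thesis by (simp add: integral_unique)
  qed
  have "(y has_integral (0 - h X - integral {X..} g)) {X..}"
  proof (subst has_integral_Ici_iff)
    show "y integrable_on {X..T}" for T by (rule integrable_continuous_interval[OF cy])
    have "((\<lambda>T. h T - h X - integral {X..T} g) \<longlongrightarrow> 0 - h X - integral {X..} g) at_top"
      by (intro tendsto_intros h_lim g_lim)
    moreover have "\<forall>\<^sub>F T in at_top. h T - h X - integral {X..T} g = integral {X..T} y"
      using yint_eq by (auto simp: eventually_at_top_linorder intro!: exI[of _ X])
    ultimately show "((\<lambda>T. integral {X..T} y) \<longlongrightarrow> 0 - h X - integral {X..} g) at_top"
      by (simp add: tendsto_cong)
  qed
  then have yX: "y integrable_on {X..}" by blast
  show ?thesis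
  proof (rule integrable_Un')
    show "y integrable_on {c..X}" by (rule integrable_continuous_interval[OF cy])
    show "y integrable_on {X..}" by (rule yX)
    show "negligible ({c..X} \<inter> {X..})"
    proof -
      have "{c..X} \<inter> {X..} = {X}" using Xc by auto
      then show ?thesis by simp
    qed
    show "{c..} = {c..X} \<union> {X..}" using Xc by auto
  qed
qed

lemma Wm_deriv: "((\<lambda>t. weberW a (-t)) has_real_derivative - weberWd a (-t)) (at t)"
  using DERIV_chain2[OF W_deriv[of a "-t"] DERIV_minus[OF DERIV_ident, of t UNIV]] by simp

lemma Wmd_deriv: "((\<lambda>t. - weberWd a (-t)) has_real_derivative (a - t^2/4) * weberW a (-t)) (at t)"
  using DERIV_minus[OF DERIV_chain2[OF Wd_deriv[of a "-t"] DERIV_minus[OF DERIV_ident, of t UNIV]]] by simp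

lemma Wp_int: "weberW a integrable_on {c..}"
  by (rule ode_integrable[OF W_deriv Wd_deriv])

lemma Wm_int: "(\<lambda>t. weberW a (-t)) integrable_on {c..}"
  by (rule ode_integrable[OF Wm_deriv Wmd_deriv])

lemma tail_eq:
  fixes f :: "real \<Rightarrow> real"
  assumes cf: "continuous_on UNIV f" and fi: "\<And>c. f integrable_on {c..}"
  shows "integral {x..} f = integral {0..} f - oint 0 x f"
proof (cases "0 \<le> x")
  case True
  have "(f has_integral (integral {0..x} f + integral {x..} f)) ({0..x} \<union> {x..})"
  proof (rule has_integral_Un)
    show "(f has_integral integral {0..x} f) {0..x}"
      by (rule integrable_integral, rule integrable_continuous_interval, rule continuous_on_subset[OF cf]) auto
    show "(f has_integral integral {x..} f) {x..}" using fi by (rule integrable_integral)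
    have "{0..x} \<inter> {x..} = {x}" using True by auto
    then show "negligible ({0..x} \<inter> {x..})" by simp
  qed
  moreover have "{0..x} \<union> {x..} = {0..}" using True by auto
  ultimately have "integral {0..} f = integral {0..x} f + integral {x..} f" by (simp add: integral_unique)
  then show ?thesis using True unfolding oint_def by simp
next
  case False
  have "(f has_integral (integral {x..0} f + integral {0..} f)) ({x..0} \<union> {0..})"
  proof (rule has_integral_Un)
    show "(f has_integral integral {x..0} f) {x..0}"
      by (rule integrable_integral, rule integrable_continuous_interval, rule continuous_on_subset[OF cf]) auto
    show "(f has_integral integral {0..} f) {0..}" using fi by (rule integrable_integral)
    have "{x..0} \<inter> {0..} = {0}" using False by auto
    then show "negligible ({x..0} \<inter> {0..})" by simp
  qed
  moreover have "{x..0} \<union> {0..} = {x..}" using False by auto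
  ultimately have "integral {x..} f = integral {x..0} f + integral {0..} f" by (simp add: integral_unique)
  then show ?thesis using False unfolding oint_def by simp
qed

lemma oint_deriv0:
  fixes f :: "real \<Rightarrow> real"
  assumes cf: "continuous_on UNIV f"
  shows "((\<lambda>x. oint 0 x f) has_real_derivative f 0) (at 0)"
proof -
  have "((\<lambda>x. integral {-1..x} f) has_real_derivative f 0) (at 0 within {-1..1})"
    by (rule integral_has_real_derivative, rule continuous_on_subset[OF cf]) auto
  then have d: "((\<lambda>x. integral {-1..x} f - integral {-1..0} f) has_real_derivative f 0) (at 0)"
    using at_within_Icc_at[of "-1::real" 0 1] by (auto intro!: derivative_eq_intros)
  show ?thesis
  proof (rule has_field_derivative_transform_within_open[OF d, of "{-1<..}"])
    fix x :: real assume x: "x \<in> {-1<..}"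
    have int: "f integrable_on {-1..max 0 x}"
      by (rule integrable_continuous_interval, rule continuous_on_subset[OF cf]) auto
    show "integral {-1..x} f - integral {-1..0} f = oint 0 x f"
    proof (cases "0 \<le> x")
      case True
      then show ?thesis using Henstock_Kurzweil_Integration.integral_combine[where a="-1" and c=0 and b=x and f=f] int x unfolding oint_def by auto
    next
      case False
      then show ?thesis using Henstock_Kurzweil_Integration.integral_combine[where a="-1" and c=x and b=0 and f=f] int x unfolding oint_def by auto
    qed
  qed auto
qed

theorem lemma2p2:
  fixes a x :: real
  shows "NW a x =
      (- deriv (NW_hat a) 0 * weberW a 0 - NW_hat a 0 * deriv (weberW a) 0) * weberW a x
    + (deriv (NW_hat a) 0 * weberW a 0 - NW_hat a 0 * deriv (weberW a) 0) * weberW a (-x)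
    - NW_hat a x"
proof -
  define Ip where "Ip = integral {0..} (weberW a)"
  define Im where "Im = integral {0..} (\<lambda>t. weberW a (-t))"
  have cP: "continuous_on UNIV (weberW a)" by (rule W_cont)
  have cM: "continuous_on UNIV (\<lambda>t. weberW a (-t))"
    by (rule continuous_on_compose2[OF W_cont[of UNIV]]) (auto intro: continuous_intros)
  have tP: "integral {x..} (weberW a) = Ip - oint 0 x (weberW a)" for x
    unfolding Ip_def by (rule tail_eq[OF cP Wp_int])
  have tM: "integral {x..} (\<lambda>t. weberW a (-t)) = Im - oint 0 x (\<lambda>t. weberW a (-t))" for x
    unfolding Im_def by (rule tail_eq[OF cM Wm_int])
  have NWh: "NW_hat a = (\<lambda>x. Im * weberW a x - Ip * weberW a (-x) - NW a x)"
    by (rule ext) (simp add: NW_hat_def NW_def tP tM algebra_simps)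
  have dNW: "(NW a has_real_derivative 0) (at 0)"
  proof -
    have "((\<lambda>x. weberW a x * oint 0 x (\<lambda>t. weberW a (-t)) - weberW a (-x) * oint 0 x (weberW a))
       has_real_derivative
        (weberWd a 0 * oint 0 0 (\<lambda>t. weberW a (-t)) + weberW a (-0) * weberW a 0)
      - (- weberWd a (-0) * oint 0 0 (weberW a) + weberW a 0 * weberW a (-0))) (at 0)"
      by (intro DERIV_diff DERIV_mult W_deriv Wm_deriv oint_deriv0[OF cP] oint_deriv0[OF cM])
    then show ?thesis unfolding NW_def[abs_def] by (simp add: oint_def)
  qed
  have dNWh: "(NW_hat a has_real_derivative (Im * W0' a + Ip * W0' a)) (at 0)"
  proof -
    have "((\<lambda>x. Im * weberW a x - Ip * weberW a (-x) - NW a x) has_real_derivative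
        Im * weberWd a 0 - Ip * (- weberWd a (-0)) - 0) (at 0)"
      by (intro DERIV_diff DERIV_cmult W_deriv Wm_deriv dNW)
    then show ?thesis unfolding NWh by (simp add: Wd_at0)
  qed
  have D1: "deriv (NW_hat a) 0 = Im * W0' a + Ip * W0' a" by (rule DERIV_imp_deriv[OF dNWh])
  have D2: "deriv (weberW a) 0 = W0' a" using DERIV_imp_deriv[OF W_deriv[of a 0]] by (simp add: Wd_at0)
  have H0: "NW_hat a 0 = (Im - Ip) * W0 a" unfolding NWh by (simp add: W_at0 NW_def oint_def algebra_simps)
  have P: "W0 a * W0' a = -1/2" by (rule W0_prod)
  have "(- deriv (NW_hat a) 0 * weberW a 0 - NW_hat a 0 * deriv (weberW a) 0) = -2 * Im * (W0 a * W0' a)"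
    unfolding D1 D2 H0 W_at0 by (simp add: algebra_simps)
  also have "\<dots> = Im" using P by simp
  finally have C1: "(- deriv (NW_hat a) 0 * weberW a 0 - NW_hat a 0 * deriv (weberW a) 0) = Im" .
  have "(deriv (NW_hat a) 0 * weberW a 0 - NW_hat a 0 * deriv (weberW a) 0) = 2 * Ip * (W0 a * W0' a)"
    unfolding D1 D2 H0 W_at0 by (simp add: algebra_simps)
  also have "\<dots> = - Ip" using P by simp
  finally have C2: "(deriv (NW_hat a) 0 * weberW a 0 - NW_hat a 0 * deriv (weberW a) 0) = - Ip" .
  have Nx: "NW_hat a x = Im * weberW a x - Ip * weberW a (-x) - NW a x" unfolding NWh by simp
  show ?thesis unfolding C1 C2 Nx by simp
qed

end
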